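(* Let $A\in\mathbb{R}^{n\times n}$, $B\in\mathbb{R}^{n\times m}$ with $(A,B)$ stabilizable, $Q\succ0$, $R\succ0$, $\alpha>1$, $\gamma,\eta\ge 0$, and let $\tilde F,\tilde P,V$ be as in the context. Consider $\dot x=Ax+Bu$, $x(0)=x_0$, under $u(t)=F_kx_k$ for $t\in[t_k,t_{k+1})$, $\delta_k=t_{k+1}-t_k$, $0=t_0<t_1<\cdots$. If for every $k$ the pair $(F_k,\delta_k)$ is a feasible solution of problem (P1) below (with the current state $x_k$), then the resulting control law is stabilizing and, for all nonzero $x_0$, $\nu(x_0)\le\alpha-1$. Problem (P1), for given $x_k$: minimize over $F_k\in\mathbb{R}^{m\times n}$, $\delta_k$ the objective $-\delta_k+\gamma\|F_k\|_0+\eta\|u_k\|_0$ with $u_k=F_kx_k$, subject to the dynamics with the held input $u(t)=F_kx_k$ and the constraint $J_k(F_k,\xi;x_k)\le\alpha\big(V(x_k)-V(x(t_k+\xi))\big)$ for all $\xi\in[0,\delta_k]$.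
   Context: $x_k:=x(t_k)$. $\tilde F\in\mathbb{R}^{m\times n}$ is a fixed gain with $A+B\tilde F$ Hurwitz, $\tilde P\succ0$ is the unique solution of $(A+B\tilde F)^T\tilde P+\tilde P(A+B\tilde F)+Q+\tilde F^TR\tilde F=0$, and $V(x):=x^T\tilde Px$. $\|M\|_0$ denotes the number of nonzero entries of a matrix or vector $M$. For $\xi\ge0$, $J_k(F_k,\xi;x_k):=\int_{t_k}^{t_k+\xi}(x^TQx+u^TRu)\,dt$ with $x$ the trajectory from $x(t_k)=x_k$ under the held input $u=F_kx_k$. $J(x_0):=\sum_{k\ge0}J_k(F_k,\delta_k;x_k)$, $\tilde J(x_0):=x_0^T\tilde Px_0$, $\nu(x_0):=(J(x_0)-\tilde J(x_0))/\tilde J(x_0)$. *)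

theory Defs
  imports "HOL-Analysis.Analysis"
begin

definition quad :: "real^'n^'n \<Rightarrow> real^'n \<Rightarrow> real" where
  "quad M x = x \<bullet> (M *v x)"

definition pos_def_mat :: "real^'n^'n \<Rightarrow> bool" where
  "pos_def_mat M \<longleftrightarrow> transpose M = M \<and> (\<forall>x. x \<noteq> 0 \<longrightarrow> 0 < quad M x)"

definition hurwitz :: "real^'n^'n \<Rightarrow> bool" where
  "hurwitz M \<longleftrightarrow>
     (\<forall>(l::complex) (v::complex^'n). v \<noteq> 0 \<and>
        (\<chi> i j. complex_of_real (M $ i $ j)) *v v = l *s v \<longrightarrow> Re l < 0)"

definition stabilizable :: "real^'n^'n \<Rightarrow> real^'m^'n \<Rightarrow> bool" where
  "stabilizable A B \<longleftrightarrow> (\<exists>K::real^'n^'m. hurwitz (A + B ** K))"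

definition held_input_traj ::
  "real^'n^'n \<Rightarrow> real^'m^'n \<Rightarrow> real^'m \<Rightarrow> (real \<Rightarrow> real^'n) \<Rightarrow> real \<Rightarrow> real \<Rightarrow> bool" where
  "held_input_traj A B u y a b \<longleftrightarrow>
     (\<forall>s\<in>{a..b}. (y has_vector_derivative (A *v y s + B *v u)) (at s within {a..b}))"

text \<open>J_k(F,xi;xk) computed along a trajectory y with y 0 = xk (time shifted so that t_k = 0).\<close>
definition Jk :: "real^'n^'n \<Rightarrow> real^'m^'m \<Rightarrow> real^'n^'m \<Rightarrow> (real \<Rightarrow> real^'n) \<Rightarrow> real \<Rightarrow> real" where
  "Jk Q R F y \<xi> = integral {0..\<xi>} (\<lambda>s. quad Q (y s) + quad R (F *v y 0))"

text \<open>The objective (involving \<gamma>, \<eta>) does not affect feasibility.\<close>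
definition P1_feasible ::
  "real^'n^'n \<Rightarrow> real^'m^'n \<Rightarrow> real^'n^'n \<Rightarrow> real^'m^'m \<Rightarrow> real \<Rightarrow> real^'n^'n
   \<Rightarrow> real^'n \<Rightarrow> real^'n^'m \<Rightarrow> real \<Rightarrow> (real \<Rightarrow> real^'n) \<Rightarrow> bool" where
  "P1_feasible A B Q R \<alpha> P xk F \<delta> y \<longleftrightarrow>
     y 0 = xk \<and> held_input_traj A B (F *v xk) y 0 \<delta> \<and>
     (\<forall>\<xi>\<in>{0..\<delta>}. Jk Q R F y \<xi> \<le> \<alpha> * (quad P xk - quad P (y \<xi>)))"

definition sample_hold_traj ::
  "real^'n^'n \<Rightarrow> real^'m^'n \<Rightarrow> (nat \<Rightarrow> real) \<Rightarrow> (nat \<Rightarrow> real^'n^'m) \<Rightarrow> real^'n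
   \<Rightarrow> (real \<Rightarrow> real^'n) \<Rightarrow> bool" where
  "sample_hold_traj A B t F x0 x \<longleftrightarrow>
     t 0 = 0 \<and> strict_mono t \<and> filterlim t at_top sequentially \<and> x 0 = x0 \<and>
     (\<forall>k. held_input_traj A B (F k *v x (t k)) x (t k) (t (Suc k)))"

definition total_cost ::
  "real^'n^'n \<Rightarrow> real^'m^'m \<Rightarrow> (nat \<Rightarrow> real) \<Rightarrow> (nat \<Rightarrow> real^'n^'m) \<Rightarrow> (real \<Rightarrow> real^'n) \<Rightarrow> nat \<Rightarrow> real" where
  "total_cost Q R t F x k = Jk Q R (F k) (\<lambda>s. x (t k + s)) (t (Suc k) - t k)"

definition nu :: "real \<Rightarrow> real^'n^'n \<Rightarrow> real^'n \<Rightarrow> real" where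
  "nu J P x0 = (J - quad P x0) / quad P x0"

end

theory Submission
  imports Defs "Jordan_Normal_Form.Schur_Decomposition"
begin

no_notation vec_index (infixl "$" 100)
no_notation scalar_prod (infix "\<bullet>" 70)


definition cform :: "nat \<Rightarrow> (nat \<Rightarrow> nat \<Rightarrow> complex) \<Rightarrow> (nat \<Rightarrow> complex) \<Rightarrow> (nat \<Rightarrow> complex) \<Rightarrow> complex" where
  "cform n H v w = (\<Sum>i<n. \<Sum>j<n. cnj (v i) * H i j * w j)"

definition capp :: "nat \<Rightarrow> (nat \<Rightarrow> nat \<Rightarrow> complex) \<Rightarrow> (nat \<Rightarrow> complex) \<Rightarrow> (nat \<Rightarrow> complex)" where
  "capp n T v = (\<lambda>i. \<Sum>j<n. T i j * v j)"

lemma cform_Suc: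
  "cform (Suc n) H v w = cnj (v 0) * H 0 0 * w 0 + cnj (v 0) * (\<Sum>j<n. H 0 (Suc j) * w (Suc j))
     + (\<Sum>i<n. cnj (v (Suc i)) * H (Suc i) 0) * w 0
     + cform n (\<lambda>i j. H (Suc i) (Suc j)) (\<lambda>i. v (Suc i)) (\<lambda>i. w (Suc i))"
  unfolding cform_def sum.lessThan_Suc_shift
  by (simp add: sum.distrib sum_distrib_left sum_distrib_right algebra_simps)

lemma cform_schur:
  "cform n (\<lambda>i j. H2 i j - a i * b j / s) y z = cform n H2 y z - (\<Sum>i<n. cnj (y i) * a i) * (\<Sum>j<n. b j * z j) / s"
  unfolding cform_def
  by (simp add: sum_subtractf sum_distrib_left sum_distrib_right sum_divide_distrib algebra_simps)

lemma capp_Suc0: "capp (Suc n) T v 0 = T 0 0 * v 0 + (\<Sum>j<n. T 0 (Suc j) * v (Suc j))"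
  unfolding capp_def sum.lessThan_Suc_shift by simp

lemma capp_SucSuc: "capp (Suc n) T v (Suc i) = T (Suc i) 0 * v 0 + capp n (\<lambda>i j. T (Suc i) (Suc j)) (\<lambda>i. v (Suc i)) i"
  unfolding capp_def sum.lessThan_Suc_shift by simp

lemma core_lyap:
  "\<forall>T H. (\<forall>i<n. \<forall>j<i. T i j = 0) \<longrightarrow> (\<forall>i<n. Re (T i i) < 0) \<longrightarrow> (\<forall>i<n. \<forall>j<n. H j i = cnj (H i j))
     \<longrightarrow> (\<forall>v. (\<exists>i<n. v i \<noteq> 0) \<longrightarrow> Re (cform n H v (capp n T v)) < 0)
     \<longrightarrow> (\<forall>v. (\<exists>i<n. v i \<noteq> 0) \<longrightarrow> Re (cform n H v v) > 0)"
proof (induction n)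
  case 0
  then show ?case by simp
next
  case (Suc n)
  show ?case
  proof (intro allI impI)
    fix T H :: "nat \<Rightarrow> nat \<Rightarrow> complex" and v :: "nat \<Rightarrow> complex"
    assume tri: "\<forall>i<Suc n. \<forall>j<i. T i j = (0::complex)"
      and dg: "\<forall>i<Suc n. Re (T i i) < 0"
      and herm: "\<forall>i<Suc n. \<forall>j<Suc n. H j i = cnj (H i j)"
      and ly: "\<forall>v. (\<exists>i<Suc n. v i \<noteq> 0) \<longrightarrow> Re (cform (Suc n) H v (capp (Suc n) T v)) < 0"
      and vnz: "\<exists>i<Suc n. v i \<noteq> 0"
    define s where "s = H 0 0"
    have cs: "cnj s = s" using herm s_def by (metis zero_less_Suc)
    hence ims: "Im s = 0" by (metis cnj.simps(2) neg_equal_zero)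
    define e0 where "e0 = (\<lambda>i::nat. if i = 0 then (1::complex) else 0)"
    have "Re (cform (Suc n) H e0 (capp (Suc n) T e0)) < 0"
      using ly by (metis e0_def one_neq_zero zero_less_Suc)
    moreover have "cform (Suc n) H e0 (capp (Suc n) T e0) = s * T 0 0"
    proof -
      have "\<And>j. j < n \<Longrightarrow> capp (Suc n) T e0 (Suc j) = 0"
        using tri unfolding capp_def e0_def by (simp add: if_distrib cong: if_cong)
      then show ?thesis
        unfolding cform_Suc by (simp add: e0_def capp_Suc0 s_def cform_def)
    qed
    ultimately have "Re s * Re (T 0 0) < 0" using ims by simp
    moreover have "Re (T 0 0) < 0" using dg by simp
    ultimately have res: "Re s > 0" by (simp add: mult_less_0_iff)
    hence snz: "s \<noteq> 0" by auto
    define L where "L = (\<lambda>y. \<Sum>j<n. H 0 (Suc j) * y j)"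
    have Lc: "(\<Sum>i<n. cnj (y i) * H (Suc i) 0) = cnj (L y)" for y
    proof -
      have "cnj (L y) = (\<Sum>j<n. cnj (H 0 (Suc j)) * cnj (y j))" by (simp add: L_def)
      also have "\<dots> = (\<Sum>i<n. cnj (y i) * H (Suc i) 0)"
        by (rule sum.cong) (use herm[rule_format, of 0] in auto)
      finally show ?thesis by simp
    qed
    define C where "C = (\<lambda>i j. H (Suc i) (Suc j) - H (Suc i) 0 * H 0 (Suc j) / s)"
    define T2 where "T2 = (\<lambda>i j. T (Suc i) (Suc j))"
    define H2 where "H2 = (\<lambda>i j. H (Suc i) (Suc j))"
    have Cform: "cform n C y z = cform n H2 y z - cnj (L y) * L z / s" for y z
      unfolding C_def H2_def cform_schur Lc L_def by simp
    have IH: "\<forall>y. (\<exists>i<n. y i \<noteq> 0) \<longrightarrow> Re (cform n C y y) > 0"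
    proof -
      have a: "\<forall>i<n. \<forall>j<i. T2 i j = 0" using tri T2_def by auto
      have b: "\<forall>i<n. Re (T2 i i) < 0" using dg T2_def by auto
      have c: "\<forall>i<n. \<forall>j<n. C j i = cnj (C i j)"
      proof (intro allI impI)
        fix i j assume ij: "i < n" "j < n"
        have h1: "H (Suc j) (Suc i) = cnj (H (Suc i) (Suc j))" using herm[rule_format, of "Suc i" "Suc j"] ij by simp
        have h2: "H (Suc j) 0 = cnj (H 0 (Suc j))" using herm[rule_format, of 0 "Suc j"] ij by simp
        have h3: "H 0 (Suc i) = cnj (H (Suc i) 0)" using herm[rule_format, of "Suc i" 0] ij by simp
        show "C j i = cnj (C i j)" unfolding C_def h1 h2 h3 using cs by (simp add: mult.commute)
      qed
      have d: "\<forall>y. (\<exists>i<n. y i \<noteq> 0) \<longrightarrow> Re (cform n C y (capp n T2 y)) < 0"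
      proof (intro allI impI)
        fix y assume ynz: "\<exists>i<n. y i \<noteq> (0::complex)"
        define v where "v = (\<lambda>i. if i = 0 then - L y / s else y (i - 1))"
        have vnz: "\<exists>i<Suc n. v i \<noteq> 0" using ynz v_def by force
        have vS: "(\<lambda>i. v (Suc i)) = y" by (simp add: v_def)
        have w0: "capp (Suc n) T v (Suc i) = capp n T2 y i" if "i < n" for i
          unfolding capp_SucSuc vS T2_def using tri that by simp
        have e1: "cform n H2 y (\<lambda>i. capp (Suc n) T v (Suc i)) = cform n H2 y (capp n T2 y)"
          unfolding cform_def using w0 by (intro sum.cong refl) simp
        have e2: "(\<Sum>j<n. H 0 (Suc j) * capp (Suc n) T v (Suc j)) = L (capp n T2 y)"
          unfolding L_def using w0 by (intro sum.cong refl) simp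
        have "cform (Suc n) H v (capp (Suc n) T v) = cform n C y (capp n T2 y)"
          unfolding cform_Suc vS Lc Cform
          unfolding H2_def[symmetric] s_def[symmetric] e1 e2
          using snz cs by (simp add: v_def field_simps)
        then show "Re (cform n C y (capp n T2 y)) < 0" using ly vnz by metis
      qed
      show ?thesis using Suc.IH a b c d by blast
    qed
    define y where "y = (\<lambda>i. v (Suc i))"
    define z where "z = v 0 + L y / s"
    have Ly: "(\<Sum>j<n. H 0 (Suc j) * v (Suc j)) = L y" by (simp add: L_def y_def)
    have eq: "cform (Suc n) H v v = cform n C y y + cnj z * s * z"
      unfolding cform_Suc Cform z_def y_def[symmetric] Lc Ly
      unfolding H2_def[symmetric] s_def[symmetric]
      using snz cs by (simp add: field_simps)
    have zz: "Re (cnj z * s * z) = Re s * (cmod z)^2"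
      using ims by (simp add: cmod_def power2_eq_square algebra_simps)
    show "Re (cform (Suc n) H v v) > 0"
    proof (cases "\<exists>i<n. y i \<noteq> 0")
      case True
      then show ?thesis using IH eq zz res by (simp add: add_pos_nonneg)
    next
      case False
      hence y0: "\<forall>i<n. y i = 0" by auto
      hence "L y = 0" unfolding L_def by simp
      moreover have "cform n C y y = 0" using y0 unfolding cform_def by simp
      moreover have "v 0 \<noteq> 0" using vnz y0 y_def by (metis less_Suc_eq_0_disj)
      ultimately show ?thesis using eq zz res z_def by simp
    qed
  qed
qed

lemma cform_cong: "(\<And>i. i<n \<Longrightarrow> v i = v' i) \<Longrightarrow> (\<And>i. i<n \<Longrightarrow> w i = w' i) \<Longrightarrow> cform n H v w = cform n H v' w'"
  unfolding cform_def by (intro sum.cong refl) auto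

lemma capp_capp: "capp n X (capp n Y v) = capp n (\<lambda>i k. \<Sum>j<n. X i j * Y j k) v"
proof (rule ext)
  fix i
  have "capp n X (capp n Y v) i = (\<Sum>j<n. \<Sum>k<n. X i j * Y j k * v k)"
    unfolding capp_def by (simp add: sum_distrib_left mult.assoc)
  also have "\<dots> = (\<Sum>k<n. \<Sum>j<n. X i j * Y j k * v k)" by (rule sum.swap)
  also have "\<dots> = capp n (\<lambda>i k. \<Sum>j<n. X i j * Y j k) v i"
    unfolding capp_def by (simp add: sum_distrib_right)
  finally show "capp n X (capp n Y v) i = capp n (\<lambda>i k. \<Sum>j<n. X i j * Y j k) v i" .
qed

lemma cform_capp:
  "cform n (\<lambda>i j. \<Sum>k<n. \<Sum>l<n. cnj (P k i) * S k l * P l j) v w = cform n S (capp n P v) (capp n P w)"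
proof -
  have "cform n S (capp n P v) (capp n P w) = (\<Sum>k<n. \<Sum>l<n. \<Sum>i<n. \<Sum>j<n. cnj (v i) * (cnj (P k i) * S k l * P l j) * w j)"
    unfolding cform_def capp_def
    by (simp add: sum_distrib_left sum_distrib_right mult_ac)
  also have "\<dots> = (\<Sum>k<n. \<Sum>i<n. \<Sum>l<n. \<Sum>j<n. cnj (v i) * (cnj (P k i) * S k l * P l j) * w j)"
    by (rule sum.cong[OF refl], rule sum.swap)
  also have "\<dots> = (\<Sum>i<n. \<Sum>k<n. \<Sum>l<n. \<Sum>j<n. cnj (v i) * (cnj (P k i) * S k l * P l j) * w j)"
    by (rule sum.swap)
  also have "\<dots> = (\<Sum>i<n. \<Sum>k<n. \<Sum>j<n. \<Sum>l<n. cnj (v i) * (cnj (P k i) * S k l * P l j) * w j)"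
    by (rule sum.cong[OF refl], rule sum.cong[OF refl], rule sum.swap)
  also have "\<dots> = (\<Sum>i<n. \<Sum>j<n. \<Sum>k<n. \<Sum>l<n. cnj (v i) * (cnj (P k i) * S k l * P l j) * w j)"
    by (rule sum.cong[OF refl], rule sum.swap)
  also have "\<dots> = cform n (\<lambda>i j. \<Sum>k<n. \<Sum>l<n. cnj (P k i) * S k l * P l j) v w"
    unfolding cform_def by (simp add: sum_distrib_left sum_distrib_right)
  finally show ?thesis by simp
qed

definition rform :: "nat \<Rightarrow> (nat \<Rightarrow> nat \<Rightarrow> real) \<Rightarrow> (nat \<Rightarrow> real) \<Rightarrow> (nat \<Rightarrow> real) \<Rightarrow> real" where
  "rform n S a b = (\<Sum>i<n. \<Sum>j<n. a i * S i j * b j)"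
definition rapp :: "nat \<Rightarrow> (nat \<Rightarrow> nat \<Rightarrow> real) \<Rightarrow> (nat \<Rightarrow> real) \<Rightarrow> (nat \<Rightarrow> real)" where
  "rapp n T v = (\<lambda>i. \<Sum>j<n. T i j * v j)"

lemma Re_cform_real:
  "Re (cform n (\<lambda>i j. complex_of_real (S i j)) u (capp n (\<lambda>i j. complex_of_real (M i j)) u))
   = rform n S (\<lambda>i. Re (u i)) (rapp n M (\<lambda>i. Re (u i))) + rform n S (\<lambda>i. Im (u i)) (rapp n M (\<lambda>i. Im (u i)))"
proof -
  define w where "w = capp n (\<lambda>i j. complex_of_real (M i j)) u"
  have Rw: "Re (w j) = rapp n M (\<lambda>i. Re (u i)) j" for j
    unfolding w_def capp_def rapp_def Re_sum by simp
  have Iw: "Im (w j) = rapp n M (\<lambda>i. Im (u i)) j" for j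
    unfolding w_def capp_def rapp_def Im_sum by simp
  have pt: "Re (cnj (u i) * complex_of_real (S i j) * w j)
      = Re (u i) * S i j * rapp n M (\<lambda>i. Re (u i)) j + Im (u i) * S i j * rapp n M (\<lambda>i. Im (u i)) j" for i j
    unfolding Rw[symmetric] Iw[symmetric] by (simp add: algebra_simps)
  show ?thesis unfolding w_def[symmetric] cform_def rform_def Re_sum pt sum.distrib ..
qed

lemma cform_real:
  "cform n (\<lambda>i j. complex_of_real (S i j)) (\<lambda>i. complex_of_real (a i)) (\<lambda>i. complex_of_real (a i))
   = complex_of_real (rform n S a a)"
  unfolding cform_def rform_def by simp



lemma rform_swap: "rform n S b a = rform n (\<lambda>i j. S j i) a b"
  unfolding rform_def by (subst sum.swap) (simp add: mult_ac)

lemma rform_avg: "rform n (\<lambda>i j. (X i j + Y i j) / 2) a b = (rform n X a b + rform n Y a b) / 2"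
proof -
  have e: "a i * ((X i j + Y i j) / 2) * b j = (a i * X i j * b j + a i * Y i j * b j) / 2" for i j
    by (simp add: field_simps)
  show ?thesis unfolding rform_def e sum_divide_distrib[symmetric] sum.distrib by simp
qed

lemma rform_zero: "(\<And>i. i < n \<Longrightarrow> a i = 0) \<Longrightarrow> rform n S a b = 0"
  unfolding rform_def by (auto intro!: sum.neutral)

lemma capp_cong: "(\<And>k. k < n \<Longrightarrow> X i k = Y i k) \<Longrightarrow> capp n X v i = capp n Y v i"
  unfolding capp_def by simp

lemma poly_root_prod: "e \<in> set es \<Longrightarrow> poly (\<Prod>a\<leftarrow>es. [:- a, 1:]) e = (0::complex)"
  by (induct es) auto

lemma mult_idx: "X \<in> carrier_mat n n \<Longrightarrow> Y \<in> carrier_mat n n \<Longrightarrow> i < n \<Longrightarrow> j < n \<Longrightarrow>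
   (X * Y) $$ (i,j) = (\<Sum>k<n. X $$ (i,k) * Y $$ (k,j))"
  by (simp add: scalar_prod_def lessThan_atLeast0)

lemma sum_UNIV_h: "bij_betw h {..<CARD('n)} (UNIV::'n::finite set) \<Longrightarrow> (\<Sum>k\<in>UNIV. f k) = (\<Sum>i<CARD('n). f (h i))"
  by (simp add: sum.reindex_bij_betw)

lemma mv_h: "bij_betw h {..<CARD('n)} (UNIV::'n::finite set) \<Longrightarrow> 
   (X *v x) $ k = (\<Sum>j<CARD('n). X $ k $ h j * x $ h j)"
  unfolding matrix_vector_mult_def by (simp add: sum_UNIV_h)

lemma inner_h: "bij_betw h {..<CARD('n)} (UNIV::'n::finite set) \<Longrightarrow> 
   (x::real^'n) \<bullet> y = (\<Sum>i<CARD('n). x $ h i * y $ h i)"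
  unfolding inner_vec_def by (simp add: sum_UNIV_h)

lemma lyap_pd:
  fixes M P :: "real^'n^'n"
  assumes hur: "hurwitz M"
    and neg: "\<And>x. x \<noteq> 0 \<Longrightarrow> (M *v x) \<bullet> (P *v x) + x \<bullet> (P *v (M *v x)) < 0"
    and xnz: "x \<noteq> 0"
  shows "quad P x > 0"
proof -
  define N where "N = CARD('n)"
  obtain h where h: "bij_betw h {..<N} (UNIV::'n set)"
    using ex_bij_betw_nat_finite[of "UNIV::'n set"] N_def by (auto simp: lessThan_atLeast0)
  define hi where "hi = inv_into {..<N} h"
  have hhi: "h (hi k) = k" for k unfolding hi_def using bij_betw_inv_into_right[OF h] by simp
  have hih: "i < N \<Longrightarrow> hi (h i) = i" for i unfolding hi_def using bij_betw_inv_into_left[OF h] by simp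
  have hiN: "hi k < N" for k
    using bij_betwE[OF bij_betw_inv_into[OF h]] unfolding hi_def by auto
  have hN: "bij_betw h {..<CARD('n)} (UNIV::'n set)" using h N_def by simp
  define Mr where "Mr = (\<lambda>i j. M $ h i $ h j)"
  define Pr where "Pr = (\<lambda>i j. P $ h i $ h j)"
  define Sr where "Sr = (\<lambda>i j. (Pr i j + Pr j i) / 2)"
  define Mn where "Mn = (\<lambda>i j. complex_of_real (Mr i j))"
  define Sn where "Sn = (\<lambda>i j. complex_of_real (Sr i j))"
  have mvh: "(X *v y) $ h i = rapp N (\<lambda>i j. X $ h i $ h j) (\<lambda>j. y $ h j) i" for X :: "real^'n^'n" and y i
    unfolding rapp_def mv_h[OF hN] N_def ..
  have innh: "y \<bullet> z = (\<Sum>i<N. y $ h i * z $ h i)" for y z :: "real^'n"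
    unfolding inner_h[OF hN] N_def ..
  have quadh: "quad P y = rform N Sr (\<lambda>i. y $ h i) (\<lambda>i. y $ h i)" for y
  proof -
    have "quad P y = rform N Pr (\<lambda>i. y $ h i) (\<lambda>i. y $ h i)"
      unfolding quad_def innh mvh rform_def rapp_def Pr_def by (simp add: sum_distrib_left mult_ac)
    moreover have "rform N Pr (\<lambda>i. y $ h i) (\<lambda>i. y $ h i) = rform N (\<lambda>i j. Pr j i) (\<lambda>i. y $ h i) (\<lambda>i. y $ h i)"
      by (rule rform_swap)
    ultimately show ?thesis unfolding Sr_def rform_avg by simp
  qed
  have rlink: "rform N Sr a (rapp N Mr a) \<le> 0 \<and> ((\<exists>i<N. a i \<noteq> 0) \<longrightarrow> rform N Sr a (rapp N Mr a) < 0)" for a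
  proof (cases "\<exists>i<N. a i \<noteq> 0")
    case False
    then show ?thesis using rform_zero[of N a] by auto
  next
    case True
    define y where "y = (\<chi> k. a (hi k))"
    have ya: "i < N \<Longrightarrow> y $ h i = a i" for i unfolding y_def by (simp add: hih)
    have ynz: "y \<noteq> 0" using True ya by (metis zero_index)
    have ra: "rapp N Mr (\<lambda>i. y $ h i) = rapp N Mr a" unfolding rapp_def using ya by (intro ext sum.cong) auto
    have e1: "y \<bullet> (P *v (M *v y)) = rform N Pr a (rapp N Mr a)"
    proof -
      have "y \<bullet> (P *v (M *v y)) = (\<Sum>i<N. a i * (\<Sum>j<N. Pr i j * rapp N Mr a j))"
        unfolding innh mvh[of P] rapp_def[of N _ "\<lambda>j. (M *v y) $ h j"] mvh[of M] ra
        using ya by (intro sum.cong refl) (simp add: Pr_def Mr_def rapp_def)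
      then show ?thesis unfolding rform_def by (simp add: sum_distrib_left mult_ac)
    qed
    have e2: "(M *v y) \<bullet> (P *v y) = rform N Pr (rapp N Mr a) a"
    proof -
      have "(M *v y) \<bullet> (P *v y) = (\<Sum>i<N. rapp N Mr a i * (\<Sum>j<N. Pr i j * a j))"
        unfolding innh mvh[of P] mvh[of M] 
        using ya by (intro sum.cong refl) (simp add: Pr_def Mr_def rapp_def)
      then show ?thesis unfolding rform_def by (simp add: sum_distrib_left mult_ac)
    qed
    have "rform N Sr a (rapp N Mr a) = ((M *v y) \<bullet> (P *v y) + y \<bullet> (P *v (M *v y))) / 2"
      unfolding e1 e2 Sr_def rform_avg rform_swap[of N Pr "rapp N Mr a" a] by simp
    then show ?thesis using neg[OF ynz] True by simp
  qed
  define A where "A = Matrix.mat N N (\<lambda>(i,j). Mn i j)"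
  have A: "A \<in> carrier_mat N N" unfolding A_def by simp
  obtain es where es: "char_poly A = (\<Prod>a\<leftarrow>es. [:- a, 1:])"
    using char_poly_factorized[OF A] by blast
  obtain B Pm Qm where sd: "schur_decomposition A es = (B, Pm, Qm)" by (cases "schur_decomposition A es") auto
  from schur_decomposition[OF A es sd]
  have sim: "similar_mat_wit A B Pm Qm" and ut: "upper_triangular B" and dg: "diag_mat B = es" by auto
  have dA: "dim_row A = N" using A by simp
  have B: "B \<in> carrier_mat N N" and Pm: "Pm \<in> carrier_mat N N" and Qm: "Qm \<in> carrier_mat N N"
    and PQ: "Pm * Qm = 1\<^sub>m N" and QP: "Qm * Pm = 1\<^sub>m N" and APQ: "A = Pm * B * Qm"
    using sim unfolding similar_mat_wit_def dA Let_def by auto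
  have AP: "A * Pm = Pm * B"
  proof -
    have "A * Pm = Pm * B * (Qm * Pm)" unfolding APQ using B Pm Qm by (simp add: assoc_mult_mat[of _ N N _ N _ N])
    also have "\<dots> = Pm * B" unfolding QP using B Pm by simp
    finally show ?thesis .
  qed
  define T where "T = (\<lambda>i j. B $$ (i,j))"
  define Pf where "Pf = (\<lambda>i j. Pm $$ (i,j))"
  define Qf where "Qf = (\<lambda>i j. Qm $$ (i,j))"
  have PQf: "i < N \<Longrightarrow> j < N \<Longrightarrow> (\<Sum>k<N. Pf i k * Qf k j) = (if i = j then 1 else 0)" for i j
    using mult_idx[OF Pm Qm, of i j] PQ unfolding Pf_def Qf_def by simp
  have QPf: "i < N \<Longrightarrow> j < N \<Longrightarrow> (\<Sum>k<N. Qf i k * Pf k j) = (if i = j then 1 else 0)" for i j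
    using mult_idx[OF Qm Pm, of i j] QP unfolding Pf_def Qf_def by simp
  have APf: "i < N \<Longrightarrow> j < N \<Longrightarrow> (\<Sum>k<N. Mn i k * Pf k j) = (\<Sum>k<N. Pf i k * T k j)" for i j
    using mult_idx[OF A Pm, of i j] mult_idx[OF Pm B, of i j] AP unfolding Pf_def T_def A_def
    by simp
  have capp_inv: "i < N \<Longrightarrow> capp N Qf (capp N Pf v) i = v i" for v i
  proof -
    assume i: "i < N"
    have "capp N Qf (capp N Pf v) i = capp N (\<lambda>i k. if i = k then 1 else 0) v i"
      unfolding capp_capp using QPf i by (intro capp_cong) simp
    also have "\<dots> = (\<Sum>j<N. if i = j then v j else 0)" unfolding capp_def by (intro sum.cong) auto
    also have "\<dots> = v i" using i by simp
    finally show ?thesis .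
  qed
  have capp_inv2: "i < N \<Longrightarrow> capp N Pf (capp N Qf v) i = v i" for v i
  proof -
    assume i: "i < N"
    have "capp N Pf (capp N Qf v) i = capp N (\<lambda>i k. if i = k then 1 else 0) v i"
      unfolding capp_capp using PQf i by (intro capp_cong) simp
    also have "\<dots> = (\<Sum>j<N. if i = j then v j else 0)" unfolding capp_def by (intro sum.cong) auto
    also have "\<dots> = v i" using i by simp
    finally show ?thesis .
  qed
  define H where "H = (\<lambda>i j. \<Sum>k<N. \<Sum>l<N. cnj (Pf k i) * Sn k l * Pf l j)"
  have tri: "\<forall>i<N. \<forall>j<i. T i j = 0" using ut B unfolding upper_triangular_def T_def by auto
  have diag: "\<forall>i<N. Re (T i i) < 0"
  proof (intro allI impI)
    fix i assume i: "i < N"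
    have Tes: "T i i = es ! i" "i < length es"
      using dg[symmetric] i B unfolding diag_mat_def T_def by auto
    hence "poly (char_poly A) (T i i) = 0" unfolding es by (intro poly_root_prod) simp
    hence "eigenvalue A (T i i)" using eigenvalue_root_char_poly[OF A] by simp
    then obtain v where ev: "eigenvector A v (T i i)" unfolding eigenvalue_def by blast
    hence v: "v \<in> carrier_vec N" "v \<noteq> 0\<^sub>v N" "A *\<^sub>v v = T i i \<cdot>\<^sub>v v"
      unfolding eigenvector_def dA by auto
    define z where "z = (\<chi> k. vec_index v (hi k))"
    have "\<exists>j<N. vec_index v j \<noteq> 0" using v(1,2) by (auto simp: Matrix.vec_eq_iff)
    then obtain j where "j < N" "vec_index v j \<noteq> 0" by blast
    hence znz: "z \<noteq> 0" unfolding z_def by (metis hih vec_lambda_beta zero_index)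
    have "(\<chi> i j. complex_of_real (M $ i $ j)) *v z = T i i *s z"
    proof (rule iffD2[OF Finite_Cartesian_Product.vec_eq_iff], rule allI)
      fix k :: 'n
      define i' where "i' = hi k"
      have i': "i' < N" "k = h i'" unfolding i'_def by (auto simp: hiN hhi)
      have "((\<chi> i j. complex_of_real (M $ i $ j)) *v z) $ k = (\<Sum>j<N. Mn i' j * vec_index v j)"
        unfolding matrix_vector_mult_def sum_UNIV_h[OF hN] N_def[symmetric]
        by (simp add: z_def hih Mn_def Mr_def i')
      also have "\<dots> = vec_index (A *\<^sub>v v) i'"
        using i' v(1) unfolding A_def by (simp add: scalar_prod_def lessThan_atLeast0)
      also have "\<dots> = T i i * z $ k" unfolding v(3) using i' v(1) by (simp add: z_def hih)
      finally show "((\<chi> i j. complex_of_real (M $ i $ j)) *v z) $ k = (T i i *s z) $ k" by simp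
    qed
    then show "Re (T i i) < 0" using hur znz unfolding hurwitz_def by blast
  qed
  have herm: "\<forall>i<N. \<forall>j<N. H j i = cnj (H i j)"
  proof (intro allI impI)
    fix i j
    have "H j i = (\<Sum>l<N. \<Sum>k<N. cnj (Pf l j) * Sn l k * Pf k i)" unfolding H_def ..
    also have "\<dots> = (\<Sum>k<N. \<Sum>l<N. cnj (Pf l j) * Sn l k * Pf k i)" by (rule sum.swap)
    also have "\<dots> = cnj (H i j)" unfolding H_def by (simp add: Sn_def Sr_def mult_ac add.commute)
    finally show "H j i = cnj (H i j)" .
  qed
  have lyap: "\<forall>v. (\<exists>i<N. v i \<noteq> 0) \<longrightarrow> Re (cform N H v (capp N T v)) < 0"
  proof (intro allI impI)
    fix v :: "nat \<Rightarrow> complex" assume vnz: "\<exists>i<N. v i \<noteq> 0"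
    define u where "u = capp N Pf v"
    have "cform N H v (capp N T v) = cform N Sn u (capp N Pf (capp N T v))"
      unfolding H_def cform_capp u_def ..
    also have "\<dots> = cform N Sn u (capp N Mn u)"
    proof (rule cform_cong[OF refl])
      fix i assume i: "i < N"
      show "capp N Pf (capp N T v) i = capp N Mn u i"
        unfolding u_def capp_capp using APf i by (intro capp_cong) simp
    qed
    finally have eq: "cform N H v (capp N T v) = cform N Sn u (capp N Mn u)" .
    have unz: "\<exists>i<N. u i \<noteq> 0"
    proof (rule ccontr)
      assume "\<not> (\<exists>i<N. u i \<noteq> 0)"
      hence u0: "\<forall>i<N. u i = 0" by blast
      have "v i = 0" if i: "i < N" for i
      proof -
        have "v i = (\<Sum>j<N. Qf i j * u j)" using capp_inv[OF i, of v] unfolding u_def capp_def[of N Qf] by simp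
        also have "\<dots> = 0" using u0 by simp
        finally show ?thesis .
      qed
      thus False using vnz by blast
    qed
    then obtain i where i: "i < N" "u i \<noteq> 0" by blast
    have "Re (u i) \<noteq> 0 \<or> Im (u i) \<noteq> 0" using i(2) complex_eq_iff by auto
    then show "Re (cform N H v (capp N T v)) < 0"
      unfolding eq Sn_def Mn_def Re_cform_real
      using rlink[of "\<lambda>i. Re (u i)"] rlink[of "\<lambda>i. Im (u i)"] i(1) by fastforce
  qed
  have pos: "\<forall>v. (\<exists>i<N. v i \<noteq> 0) \<longrightarrow> Re (cform N H v v) > 0"
    using core_lyap[of N] tri diag herm lyap by blast
  define a where "a = (\<lambda>i. x $ h i)"
  define u where "u = (\<lambda>i. complex_of_real (a i))"
  define v where "v = capp N Qf u"
  have Pv: "i < N \<Longrightarrow> capp N Pf v i = u i" for i unfolding v_def using capp_inv2 by simp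
  have vnz: "\<exists>i<N. v i \<noteq> 0"
  proof (rule ccontr)
    assume "\<not> (\<exists>i<N. v i \<noteq> 0)"
    hence "\<And>i. i < N \<Longrightarrow> u i = 0" using Pv unfolding capp_def by (metis (no_types, lifting) lessThan_iff mult_zero_right sum.neutral)
    hence "\<And>k. x $ k = 0" unfolding u_def a_def by (metis hhi hiN of_real_eq_0_iff)
    thus False using xnz by (simp add: Finite_Cartesian_Product.vec_eq_iff)
  qed
  have "cform N H v v = cform N Sn u u"
    unfolding H_def cform_capp using Pv by (intro cform_cong) auto
  also have "\<dots> = complex_of_real (quad P x)" unfolding Sn_def u_def cform_real quadh a_def ..
  finally show ?thesis using pos vnz by (metis Re_complex_of_real)
qed


lemma quad_zero[simp]: "quad P 0 = 0" unfolding quad_def by simp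

lemma quad_scale: "quad P (c *\<^sub>R x) = c * c * quad P x"
proof -
  have "P *v (c *\<^sub>R x) = c *\<^sub>R (P *v x)"
    using linear_cmul[OF matrix_vector_mul_linear[of P]] by (simp add: scaleR_conv_of_real)
  then show ?thesis unfolding quad_def by simp
qed

lemma quad_cont: "continuous_on S (quad P)"
  unfolding quad_def by (intro continuous_intros)

lemma quad_lower:
  fixes P :: "real^'n^'n"
  assumes pd: "\<And>x. x \<noteq> 0 \<Longrightarrow> quad P x > 0"
  shows "\<exists>a>0. \<forall>x. a * (norm x)^2 \<le> quad P x"
proof -
  have ne: "sphere (0::real^'n) 1 \<noteq> {}"
    using vector_choose_size[of 1] by (auto simp: sphere_def)
  obtain x0 where x0: "x0 \<in> sphere 0 1" and mn: "\<And>y. y \<in> sphere 0 1 \<Longrightarrow> quad P x0 \<le> quad P y"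
    using continuous_attains_inf[OF compact_sphere ne quad_cont] by blast
  have a: "quad P x0 > 0" using pd x0 by (intro pd) auto
  have "quad P x0 * (norm x)^2 \<le> quad P x" for x
  proof (cases "x = 0")
    case True then show ?thesis by simp
  next
    case False
    define y where "y = (1 / norm x) *\<^sub>R x"
    have "y \<in> sphere 0 1" using False by (simp add: y_def)
    hence "quad P x0 \<le> quad P y" by (rule mn)
    moreover have "x = norm x *\<^sub>R y" using False by (simp add: y_def)
    hence "quad P x = norm x * norm x * quad P y" by (metis quad_scale)
    ultimately show ?thesis
      using mult_right_mono[of "quad P x0" "quad P y" "norm x * norm x"] by (simp add: power2_eq_square mult_ac)
  qed
  then show ?thesis using a by blast
qed

lemma quad_upper:
  fixes P :: "real^'n^'n"
  shows "\<exists>b>0. \<forall>x. quad P x \<le> b * (norm x)^2"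
proof -
  obtain b where b: "b > 0" "\<And>x. norm (P *v x) \<le> norm x * b"
    using bounded_linear.pos_bounded[OF matrix_vector_mul_bounded_linear[of P]] by blast
  have "quad P x \<le> b * (norm x)^2" for x
  proof -
    have "quad P x \<le> norm x * norm (P *v x)" unfolding quad_def by (rule norm_cauchy_schwarz)
    also have "\<dots> \<le> norm x * (norm x * b)" by (rule mult_left_mono[OF b(2)]) simp
    finally show ?thesis by (simp add: power2_eq_square mult_ac)
  qed
  then show ?thesis using b by blast
qed

lemma mat_bound: "\<exists>b>0. \<forall>x. norm ((M::real^'n^'m) *v x) \<le> b * norm x"
  using bounded_linear.pos_bounded[OF matrix_vector_mul_bounded_linear[of M]] by (metis mult.commute)

lemma integral_nonneg_any:
  fixes f :: "real \<Rightarrow> real"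
  assumes "\<And>s. s \<in> S \<Longrightarrow> 0 \<le> f s"
  shows "0 \<le> integral S f"
proof (cases "f integrable_on S")
  case True then show ?thesis using integral_nonneg assms by blast
next
  case False then show ?thesis by (simp add: not_integrable_integral)
qed

lemma mvt_bound:
  fixes y :: "real \<Rightarrow> 'a::real_normed_vector"
  assumes der: "\<And>s. s \<in> {0..d} \<Longrightarrow> (y has_vector_derivative y' s) (at s within {0..d})"
    and bnd: "\<And>s. s \<in> {0..d} \<Longrightarrow> norm (y' s) \<le> C"
    and s: "0 \<le> s" "s \<le> d"
  shows "norm (y s - y 0) \<le> C * s"
proof (cases "s = 0")
  case True then show ?thesis by simp
next
  case False
  hence s0: "0 < s" using s by simp
  have cont: "continuous_on {0..d} y" using der by (rule continuous_on_vector_derivative)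
  have "norm (y s - y 0) \<le> C * s - C * 0"
  proof (rule differentiable_bound_general[OF s0, where f' = y' and \<phi>' = "\<lambda>_. C"])
    show "continuous_on {0..s} y" by (rule continuous_on_subset[OF cont]) (use s in auto)
    show "continuous_on {0..s} (\<lambda>t. C * t)" by (intro continuous_intros)
    fix x assume x: "0 < x" "x < s"
    have xd: "x \<in> {0..d}" using x s by auto
    have "(y has_vector_derivative y' x) (at x within {0<..<d})"
      by (rule has_vector_derivative_within_subset[OF der[OF xd]]) auto
    moreover have "at x within {0<..<d} = at x" using x s by (intro at_within_open) auto
    ultimately show "(y has_vector_derivative y' x) (at x)" by simp
    show "((\<lambda>t. C * t) has_vector_derivative C) (at x)"
      using DERIV_cmult_Id[of C x UNIV] unfolding has_real_derivative_iff_has_vector_derivative .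
    show "norm (y' x) \<le> C" using bnd x s by simp
  qed
  then show ?thesis by simp
qed

lemma interval_of:
  fixes t :: "nat \<Rightarrow> real"
  assumes t0: "t 0 = 0" and tinf: "filterlim t at_top sequentially" and s: "0 \<le> s"
  shows "\<exists>k. t k \<le> s \<and> s < t (Suc k)"
proof -
  have "eventually (\<lambda>n. s + 1 \<le> t n) sequentially" using tinf unfolding filterlim_at_top by blast
  then obtain N where "\<forall>n\<ge>N. s + 1 \<le> t n" unfolding eventually_sequentially by blast
  hence "s + 1 \<le> t N" by simp
  hence "\<exists>n. s < t n" by (intro exI[of _ N]) simp
  then obtain n where n: "s < t n" by blast
  define m where "m = (LEAST n. s < t n)"
  have m: "s < t m" unfolding m_def by (rule LeastI[of _ n]) (rule n)
  have "m \<noteq> 0"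
  proof
    assume "m = 0" with m t0 s show False by simp
  qed
  then obtain k where k: "m = Suc k" by (cases m) auto
  have "\<not> s < t k" using not_less_Least[of k "\<lambda>n. s < t n"] k m_def by simp
  then have "t k \<le> s \<and> s < t (Suc k)" using m k by auto
  then show ?thesis by blast
qed

lemma caseB_arith:
  fixes rm bB uu hh h0 l dk :: real
  assumes "rm>0" "bB>0" "hh>0" "hh \<le> h0" "hh \<le> dk" "l>0" "bB*uu*hh > l/4" "uu \<ge> 0"
  shows "rm * l^2 / (16 * bB^2 * h0^2) * hh \<le> dk * (rm * uu^2)"
proof -
  have h0: "h0 > 0" using assms by simp
  have "(l/4)^2 \<le> (bB*uu*hh)^2" using assms by (intro power_mono) auto
  hence l2: "l^2 \<le> 16 * bB^2 * uu^2 * hh^2" by (simp add: power_mult_distrib power_divide)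
  have "rm * l^2 / (16 * bB^2 * h0^2) * hh \<le> rm * (16 * bB^2 * uu^2 * hh^2) / (16 * bB^2 * h0^2) * hh"
    using l2 assms h0 by (intro mult_right_mono divide_right_mono mult_left_mono) auto
  also have "\<dots> = rm * uu^2 * hh * (hh^2 / h0^2)" using assms h0 by (simp add: field_simps power2_eq_square)
  also have "\<dots> \<le> rm * uu^2 * hh * 1"
  proof (rule mult_left_mono)
    show "hh^2 / h0^2 \<le> 1" using assms h0 by (simp add: power_mono)
  qed (use assms in auto)
  also have "\<dots> \<le> dk * (rm * uu^2)" using assms by (simp add: mult_right_mono mult.commute mult.left_commute)
  finally show ?thesis .
qed

lemma main_ctrl:
  fixes A :: "real^'n^'n" and B :: "real^'m^'n"
    and Q :: "real^'n^'n" and R :: "real^'m^'m"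
    and Pt :: "real^'n^'n" and \<alpha> :: real
  assumes Qpd: "pos_def_mat Q" and Rpd: "pos_def_mat R" and al: "\<alpha> > 1"
    and Ppd: "\<And>x. x \<noteq> 0 \<Longrightarrow> quad Pt x > 0"
  shows "\<exists>c. \<forall>x0 t F x.
           sample_hold_traj A B t F x0 x \<and>
           (\<forall>k. P1_feasible A B Q R \<alpha> Pt (x (t k)) (F k) (t (Suc k) - t k) (\<lambda>s. x (t k + s)))
           \<longrightarrow> (\<forall>s\<ge>0. norm (x s) \<le> c * norm x0)
             \<and> (x \<longlongrightarrow> 0) at_top
             \<and> summable (total_cost Q R t F x)
             \<and> (x0 \<noteq> 0 \<longrightarrow> nu (\<Sum>k. total_cost Q R t F x k) Pt x0 \<le> \<alpha> - 1)"
proof -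
  obtain p1 where p1: "p1 > 0" "\<And>x. p1 * (norm x)^2 \<le> quad Pt x" using quad_lower[OF Ppd] by blast
  obtain p2 where p2: "p2 > 0" "\<And>x. quad Pt x \<le> p2 * (norm x)^2" using quad_upper[of Pt] by blast
  have Qp: "\<And>x. x \<noteq> 0 \<Longrightarrow> quad Q x > 0" using Qpd unfolding pos_def_mat_def by blast
  have Rp: "\<And>x. x \<noteq> 0 \<Longrightarrow> quad R x > 0" using Rpd unfolding pos_def_mat_def by blast
  obtain qm where qm: "qm > 0" "\<And>x. qm * (norm x)^2 \<le> quad Q x" using quad_lower[OF Qp] by blast
  obtain rm where rm: "rm > 0" "\<And>x. rm * (norm x)^2 \<le> quad R x" using quad_lower[OF Rp] by blast
  have Qnn: "0 \<le> quad Q x" for x using qm(1) qm(2)[of x] by (metis mult_nonneg_nonneg zero_le_power2 order_trans less_imp_le)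
  have Rnn: "0 \<le> quad R x" for x using rm(1) rm(2)[of x] by (metis mult_nonneg_nonneg zero_le_power2 order_trans less_imp_le)
  have Pnn: "0 \<le> quad Pt x" for x using p1(1) p1(2)[of x] by (metis mult_nonneg_nonneg zero_le_power2 order_trans less_imp_le)
  obtain aA where aA: "aA > 0" "\<And>v. norm (A *v v) \<le> aA * norm v" using mat_bound[of A] by blast
  obtain bB where bB: "bB > 0" "\<And>v. norm (B *v v) \<le> bB * norm v" using mat_bound[of B] by blast
  define c where "c = sqrt (p2 / p1)"
  have pp: "0 \<le> p2 / p1" using p1(1) p2(1) by (simp add: less_imp_le)
  have c0: "c \<ge> 0" unfolding c_def using pp by simp
  have c2: "c^2 = p2 / p1" unfolding c_def using pp by simp
  have alpos: "\<alpha> > 0" using al by simp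
  show ?thesis
  proof (intro exI allI impI)
    fix x0 t F x
    assume H: "sample_hold_traj A B t F x0 x \<and>
           (\<forall>k. P1_feasible A B Q R \<alpha> Pt (x (t k)) (F k) (t (Suc k) - t k) (\<lambda>s. x (t k + s)))"
    have t0: "t 0 = 0" and smt: "strict_mono t" and tinf: "filterlim t at_top sequentially"
      and x00: "x 0 = x0" using H unfolding sample_hold_traj_def by auto
    define d where "d = (\<lambda>k. t (Suc k) - t k)"
    have dpos: "d k > 0" for k unfolding d_def using strict_monoD[OF smt, of k "Suc k"] by simp
    have feas: "held_input_traj A B (F k *v x (t k)) (\<lambda>s. x (t k + s)) 0 (d k) \<and>
        (\<forall>\<xi>\<in>{0..d k}. Jk Q R (F k) (\<lambda>s. x (t k + s)) \<xi> \<le> \<alpha> * (quad Pt (x (t k)) - quad Pt (x (t k + \<xi>))))" for k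
      using H unfolding P1_feasible_def d_def by simp
    have Jnn: "0 \<le> Jk Q R G y \<xi>" for G y \<xi>
      unfolding Jk_def by (rule integral_nonneg_any) (simp add: Qnn Rnn add_nonneg_nonneg)
    have Vdec: "quad Pt (x (t k + \<xi>)) \<le> quad Pt (x (t k))" if "\<xi> \<in> {0..d k}" for k \<xi>
    proof -
      have "Jk Q R (F k) (\<lambda>s. x (t k + s)) \<xi> \<le> \<alpha> * (quad Pt (x (t k)) - quad Pt (x (t k + \<xi>)))"
        using feas[of k] that by blast
      hence "0 \<le> \<alpha> * (quad Pt (x (t k)) - quad Pt (x (t k + \<xi>)))"
        using Jnn[of "F k" "\<lambda>s. x (t k + s)" \<xi>] by linarith
      then show ?thesis using alpos by (simp add: zero_le_mult_iff)
    qed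
    have tS: "t k + d k = t (Suc k)" for k unfolding d_def by simp
    have Vstep: "quad Pt (x (t (Suc k))) \<le> quad Pt (x (t k))" for k
      using Vdec[of "d k" k] dpos[of k] tS[of k] by (simp add: less_imp_le)
    have dec: "decseq (\<lambda>k. quad Pt (x (t k)))" by (rule decseq_SucI) (rule Vstep)
    have tge0: "t k \<ge> 0" for k using strict_mono_less_eq[OF smt, of 0 k] t0 by simp
    have Vs: "quad Pt (x s) \<le> quad Pt (x (t j))" if js: "t j \<le> s" for j s
    proof -
      have "0 \<le> s" using tge0[of j] js by simp
      then obtain k where k: "t k \<le> s" "s < t (Suc k)" using interval_of[OF t0 tinf] by blast
      have "j < Suc k" using strict_mono_less[OF smt] js k(2) by (metis le_less_trans)
      hence jk: "j \<le> k" by simp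
      have "s - t k \<in> {0..d k}" using k unfolding d_def by auto
      hence "quad Pt (x (t k + (s - t k))) \<le> quad Pt (x (t k))" by (rule Vdec)
      also have "\<dots> \<le> quad Pt (x (t j))" using decseqD[OF dec jk] .
      finally show ?thesis by simp
    qed
    have V0: "quad Pt (x s) \<le> quad Pt x0" if "s \<ge> 0" for s using Vs[of 0 s] t0 x00 that by simp
    have nb: "norm (x s) \<le> c * norm x0" if s: "s \<ge> 0" for s
    proof -
      have "p1 * (norm (x s))^2 \<le> p2 * (norm x0)^2" using p1(2)[of "x s"] V0[OF s] p2(2)[of x0] by simp
      hence "(norm (x s))^2 \<le> (p2 / p1) * (norm x0)^2" using p1(1) by (simp add: field_simps)
      also have "\<dots> = (c * norm x0)^2" using c2 by (simp add: power_mult_distrib)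
      finally have "(norm (x s))^2 \<le> (c * norm x0)^2" .
      then show ?thesis by (rule power2_le_imp_le) (simp add: c0)
    qed
    define tc where "tc = total_cost Q R t F x"
    have tc_eq: "tc k = Jk Q R (F k) (\<lambda>s. x (t k + s)) (d k)" for k
      by (simp add: tc_def total_cost_def d_def)
    have tcnn: "0 \<le> tc k" for k using tc_eq Jnn by simp
    have tcle: "tc k \<le> \<alpha> * (quad Pt (x (t k)) - quad Pt (x (t (Suc k))))" for k
    proof -
      have "d k \<in> {0..d k}" using dpos[of k] by (simp add: less_imp_le)
      hence "Jk Q R (F k) (\<lambda>s. x (t k + s)) (d k) \<le> \<alpha> * (quad Pt (x (t k)) - quad Pt (x (t k + d k)))"
        using feas[of k] by blast
      then show ?thesis unfolding tc_eq tS .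
    qed
    have psum: "sum tc {..<n} \<le> \<alpha> * quad Pt x0" for n
    proof -
      have "sum tc {..<n} \<le> (\<Sum>k<n. \<alpha> * (quad Pt (x (t k)) - quad Pt (x (t (Suc k)))))"
        by (rule sum_mono) (rule tcle)
      also have "\<dots> = \<alpha> * (quad Pt (x (t 0)) - quad Pt (x (t n)))"
        using sum_lessThan_telescope'[of "\<lambda>k. quad Pt (x (t k))" n] by (simp add: sum_distrib_left[symmetric])
      also have "\<dots> \<le> \<alpha> * quad Pt x0" using t0 x00 Pnn[of "x (t n)"] alpos by simp
      finally show ?thesis .
    qed
    have summ: "summable tc" by (rule summableI_nonneg_bounded[OF tcnn psum])
    have sumle: "suminf tc \<le> \<alpha> * quad Pt x0" by (rule suminf_le_const[OF summ psum])
    have nuok: "nu (\<Sum>k. tc k) Pt x0 \<le> \<alpha> - 1" if "x0 \<noteq> 0"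
    proof -
      have pos: "quad Pt x0 > 0" using Ppd that by blast
      have "suminf tc - quad Pt x0 \<le> (\<alpha> - 1) * quad Pt x0" using sumle by (simp add: algebra_simps)
      then show ?thesis unfolding nu_def using pos by (simp add: divide_le_eq)
    qed
    have small: "\<forall>\<epsilon>>0. \<exists>k. quad Pt (x (t k)) < \<epsilon>"
    proof (rule ccontr)
      assume "\<not> (\<forall>\<epsilon>>0. \<exists>k. quad Pt (x (t k)) < \<epsilon>)"
      then obtain \<epsilon> where eps: "\<epsilon> > 0" "\<And>k. \<epsilon> \<le> quad Pt (x (t k))" by (auto simp: not_less)
      define l where "l = sqrt (\<epsilon> / p2)"
      have l0: "l > 0" unfolding l_def using eps(1) p2(1) by simp
      have l2: "l^2 = \<epsilon> / p2" unfolding l_def using eps(1) p2(1) by simp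
      have xl: "l \<le> norm (x (t k))" for k
      proof -
        have "\<epsilon> \<le> p2 * (norm (x (t k)))^2" using eps(2)[of k] p2(2)[of "x (t k)"] by linarith
        hence "l^2 \<le> (norm (x (t k)))^2" unfolding l2 using p2(1) by (simp add: field_simps)
        thus ?thesis by (rule power2_le_imp_le) simp
      qed
      define K0 where "K0 = c * norm x0"
      have K0: "0 \<le> K0" unfolding K0_def using c0 by simp
      have xK: "norm (x s) \<le> K0" if "s \<ge> 0" for s using nb[OF that] K0_def by simp
      define w where "w = aA * (K0 + 1)"
      have w: "w > 0" unfolding w_def using aA(1) K0 by simp
      define h0 where "h0 = l / (4 * w)"
      have h0: "h0 > 0" unfolding h0_def using l0 w by simp
      have h0b: "aA * K0 * h0 \<le> l / 4"
      proof -
        have "aA * K0 * h0 \<le> w * h0" unfolding w_def using aA(1) h0 by (simp add: algebra_simps)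
        also have "\<dots> = l / 4" unfolding h0_def using w by (simp add: field_simps)
        finally show ?thesis .
      qed
      define c0 where "c0 = min (qm * l^2 / 4) (rm * l^2 / (16 * bB^2 * h0^2))"
      have c0pos: "c0 > 0" unfolding c0_def using qm(1) rm(1) l0 bB(1) h0 by simp
      have est: "c0 * min (d k) h0 \<le> tc k" for k
      proof -
        define y where "y = (\<lambda>s. x (t k + s))"
        define u where "u = F k *v x (t k)"
        define dk where "dk = d k"
        have dk: "dk > 0" using dpos dk_def by simp
        have der: "\<And>s. s \<in> {0..dk} \<Longrightarrow> (y has_vector_derivative (A *v y s + B *v u)) (at s within {0..dk})"
          using feas[of k] unfolding held_input_traj_def y_def u_def dk_def by simp
        have yK: "norm (y s) \<le> K0" if "s \<in> {0..dk}" for s using xK[of "t k + s"] tge0[of k] that y_def by simp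
        have y0: "y 0 = x (t k)" unfolding y_def by simp
        have ly0: "l \<le> norm (y 0)" using xl y0 by simp
        have cont: "continuous_on {0..dk} y" using der by (rule continuous_on_vector_derivative)
        define f where "f = (\<lambda>s. quad Q (y s) + quad R u)"
        have qc: "continuous_on {0..dk} (\<lambda>s. quad Q (y s))"
          using continuous_on_compose[OF cont quad_cont] by (simp add: o_def)
        have fcont: "continuous_on {0..dk} f" unfolding f_def by (intro continuous_on_add qc continuous_on_const)
        have fint: "f integrable_on {0..dk}" by (rule integrable_continuous_interval[OF fcont])
        have fnn: "0 \<le> f s" for s unfolding f_def using Qnn Rnn by (simp add: add_nonneg_nonneg)
        have tck: "tc k = integral {0..dk} f" unfolding tc_eq Jk_def f_def y_def u_def dk_def by simp
        define hh where "hh = min dk h0"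
        have hh: "0 < hh" "hh \<le> dk" "hh \<le> h0" unfolding hh_def using dk h0 by auto
        have fint2: "f integrable_on {0..hh}" by (rule integrable_on_subinterval[OF fint]) (use hh in auto)
        have sub: "integral {0..hh} f \<le> integral {0..dk} f"
          by (rule integral_subset_le[OF _ fint2 fint]) (use hh fnn in auto)
        have fR: "dk * quad R u \<le> integral {0..dk} f"
        proof -
          have "integral {0..dk} (\<lambda>s. quad R u) \<le> integral {0..dk} f"
            by (rule integral_le[OF integrable_const_ivl fint]) (simp add: f_def Qnn)
          then show ?thesis using dk by (simp add: content_real)
        qed
        have "c0 * hh \<le> tc k"
        proof (cases "bB * norm u * hh \<le> l / 4")
          case True
          have near: "norm (y s - y 0) \<le> l / 2" if s: "s \<in> {0..hh}" for s
          proof -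
            have "norm (y s - y 0) \<le> (aA * K0 + bB * norm u) * s"
            proof (rule mvt_bound[OF der])
              fix r assume r: "r \<in> {0..dk}"
              have "norm (A *v y r + B *v u) \<le> norm (A *v y r) + norm (B *v u)" by (rule norm_triangle_ineq)
              also have "\<dots> \<le> aA * K0 + bB * norm u"
                using aA(2)[of "y r"] bB(2)[of u] yK[OF r] aA(1) mult_left_mono[of "norm (y r)" K0 aA] by linarith
              finally show "norm (A *v y r + B *v u) \<le> aA * K0 + bB * norm u" .
            qed (use s hh in auto)
            also have "\<dots> \<le> (aA * K0 + bB * norm u) * hh" using s aA(1) K0 bB(1) by (intro mult_left_mono) auto
            also have "\<dots> = aA * K0 * hh + bB * norm u * hh" by (simp add: algebra_simps)
            also have "\<dots> \<le> aA * K0 * h0 + l / 4"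
            proof -
              have "aA * K0 * hh \<le> aA * K0 * h0" using hh(3) aA(1) K0 by (intro mult_left_mono) auto
              then show ?thesis using True by linarith
            qed
            also have "\<dots> \<le> l / 2" using h0b by simp
            finally show ?thesis .
          qed
          have fq: "qm * l^2 / 4 \<le> f s" if s: "s \<in> {0..hh}" for s
          proof -
            have "norm (y 0) - norm (y s) \<le> norm (y s - y 0)"
              using norm_triangle_ineq2[of "y 0" "y s"] by (simp add: norm_minus_commute)
            hence "l / 2 \<le> norm (y s)" using near[OF s] ly0 by linarith
            hence "(l/2)^2 \<le> (norm (y s))^2" using l0 by (intro power_mono) auto
            hence "qm * (l/2)^2 \<le> qm * (norm (y s))^2" using qm(1) by (simp add: mult_left_mono)
            moreover have "qm * (l/2)^2 = qm * l^2 / 4" by (simp add: power_divide)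
            ultimately show ?thesis unfolding f_def using qm(2)[of "y s"] Rnn[of u] by linarith
          qed
          have "integral {0..hh} (\<lambda>s. qm * l^2 / 4) \<le> integral {0..hh} f"
            by (rule integral_le[OF integrable_const_ivl fint2]) (rule fq)
          moreover have "integral {0..hh} (\<lambda>s. qm * l^2 / 4) = hh * (qm * l^2 / 4)" using hh by (simp add: content_real)
          ultimately have "hh * (qm * l^2 / 4) \<le> integral {0..hh} f" by linarith
          moreover have "c0 * hh \<le> (qm * l^2 / 4) * hh" unfolding c0_def using hh by (intro mult_right_mono) auto
          ultimately show ?thesis using sub tck by (simp add: mult.commute)
        next
          case False
          have "rm * l^2 / (16 * bB^2 * h0^2) * hh \<le> dk * (rm * (norm u)^2)"
            by (rule caseB_arith) (use rm(1) bB(1) hh l0 False in auto)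
          also have "\<dots> \<le> dk * quad R u" using rm(2)[of u] dk by (simp add: mult_left_mono)
          finally have "rm * l^2 / (16 * bB^2 * h0^2) * hh \<le> tc k" using fR tck by simp
          moreover have "c0 * hh \<le> rm * l^2 / (16 * bB^2 * h0^2) * hh" unfolding c0_def using hh by (intro mult_right_mono) auto
          ultimately show ?thesis by simp
        qed
        then show ?thesis unfolding hh_def dk_def .
      qed
      have "tc \<longlonglongrightarrow> 0" using summ by (rule summable_LIMSEQ_zero)
      hence ev: "eventually (\<lambda>k. tc k < c0 * h0) sequentially" using c0pos h0 by (intro order_tendstoD(2)) auto
      have ev2: "eventually (\<lambda>k. norm (d k) \<le> tc k / c0) sequentially"
      proof (rule eventually_mono[OF ev])
        fix k assume a: "tc k < c0 * h0"
        have "c0 * min (d k) h0 < c0 * h0" using est[of k] a by simp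
        hence "min (d k) h0 < h0" using c0pos by simp
        hence "min (d k) h0 = d k" by (simp add: min_def split: if_splits)
        hence "c0 * d k \<le> tc k" using est[of k] by simp
        then show "norm (d k) \<le> tc k / c0" using c0pos dpos[of k] by (simp add: field_simps)
      qed
      have sd: "summable d" by (rule summable_comparison_test_ev[OF ev2 summable_divide[OF summ]])
      have tb: "t n \<le> suminf d" for n
      proof -
        have "sum d {..<n} = t n" unfolding d_def sum_lessThan_telescope t0 by simp
        moreover have "sum d {..<n} \<le> suminf d" by (rule sum_le_suminf[OF sd]) (auto simp: less_imp_le[OF dpos])
        ultimately show ?thesis by simp
      qed
      have "eventually (\<lambda>n. suminf d + 1 \<le> t n) sequentially" using tinf unfolding filterlim_at_top by blast
      then obtain n where "suminf d + 1 \<le> t n" by (auto simp: eventually_sequentially)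
      then show False using tb[of n] by simp
    qed
    have conv: "(x \<longlongrightarrow> 0) at_top"
    proof (rule tendstoI)
      fix e :: real assume e: "e > 0"
      have pe: "p1 * e^2 > 0" using p1(1) e by simp
      obtain k where k: "quad Pt (x (t k)) < p1 * e^2" using small pe by blast
      have ns: "norm (x s) < e" if "s \<ge> t k" for s
      proof -
        have "p1 * (norm (x s))^2 < p1 * e^2" using p1(2)[of "x s"] Vs[OF that] k by simp
        hence "(norm (x s))^2 < e^2" using p1(1) by simp
        then show ?thesis by (rule power_less_imp_less_base) (use e in simp)
      qed
      have "\<forall>s\<ge>t k. dist (x s) 0 < e" using ns by simp
      then show "eventually (\<lambda>s. dist (x s) 0 < e) at_top"
        unfolding eventually_at_top_linorder by blast
    qed
    show "(\<forall>s\<ge>0. norm (x s) \<le> c * norm x0) \<and> (x \<longlongrightarrow> 0) at_top \<and> summable (total_cost Q R t F x)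
        \<and> (x0 \<noteq> 0 \<longrightarrow> nu (\<Sum>k. total_cost Q R t F x k) Pt x0 \<le> \<alpha> - 1)"
      using nb conv summ nuok unfolding tc_def by blast
  qed
qed


lemma inner_vmul: "(x::real^'n) \<bullet> (y v* X) = (X *v x) \<bullet> (y::real^'m)"
proof -
  have "x \<bullet> (y v* X) = (\<Sum>i\<in>UNIV. \<Sum>j\<in>UNIV. x $ i * (y $ j * X $ j $ i))"
    unfolding inner_vec_def vector_matrix_mult_def by (simp add: sum_distrib_left mult_ac)
  also have "\<dots> = (\<Sum>j\<in>UNIV. \<Sum>i\<in>UNIV. x $ i * (y $ j * X $ j $ i))" by (rule sum.swap)
  also have "\<dots> = (\<Sum>j\<in>UNIV. (\<Sum>i\<in>UNIV. X $ j $ i * x $ i) * y $ j)"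
    by (simp add: sum_distrib_left sum_distrib_right mult_ac)
  also have "\<dots> = (X *v x) \<bullet> y"
    unfolding inner_vec_def matrix_vector_mult_def by simp
  finally show ?thesis .
qed

lemma lyap_neg:
  fixes M Pt Q :: "real^'n^'n" and Ft :: "real^'n^'m" and R :: "real^'m^'m"
  assumes E: "transpose M ** Pt + Pt ** M + Q + transpose Ft ** R ** Ft = 0"
    and Qpd: "pos_def_mat Q" and Rpd: "pos_def_mat R" and x: "x \<noteq> 0"
  shows "(M *v x) \<bullet> (Pt *v x) + x \<bullet> (Pt *v (M *v x)) < 0"
proof -
  have "0 = x \<bullet> ((transpose M ** Pt + Pt ** M + Q + transpose Ft ** R ** Ft) *v x)" using E by simp
  also have "\<dots> = x \<bullet> ((Pt *v x) v* M) + x \<bullet> (Pt *v (M *v x)) + quad Q x + x \<bullet> ((R *v (Ft *v x)) v* Ft)"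
    by (simp add: matrix_vector_mult_add_rdistrib matrix_vector_mul_assoc[symmetric] inner_add_right quad_def)
  also have "\<dots> = (M *v x) \<bullet> (Pt *v x) + x \<bullet> (Pt *v (M *v x)) + quad Q x + quad R (Ft *v x)"
    by (simp add: inner_vmul quad_def)
  finally have eq: "(M *v x) \<bullet> (Pt *v x) + x \<bullet> (Pt *v (M *v x)) = - quad Q x - quad R (Ft *v x)" by linarith
  have "quad Q x > 0" using Qpd x unfolding pos_def_mat_def by blast
  moreover have "quad R (Ft *v x) \<ge> 0"
    using Rpd unfolding pos_def_mat_def by (cases "Ft *v x = 0") (auto simp: less_imp_le)
  ultimately show ?thesis unfolding eq by linarith
qed

theorem theorem2:
  fixes A :: "real^'n^'n" and B :: "real^'m^'n"
    and Q :: "real^'n^'n" and R :: "real^'m^'m"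
    and Ft :: "real^'n^'m" and Pt :: "real^'n^'n" and \<alpha> :: real
  assumes "stabilizable A B"
    and "pos_def_mat Q" and "pos_def_mat R"
    and "\<alpha> > 1"
    and "hurwitz (A + B ** Ft)"
    and "transpose (A + B ** Ft) ** Pt + Pt ** (A + B ** Ft) + Q + transpose Ft ** R ** Ft = 0"
  shows "\<exists>c. \<forall>x0 t F x.
           sample_hold_traj A B t F x0 x \<and>
           (\<forall>k. P1_feasible A B Q R \<alpha> Pt (x (t k)) (F k) (t (Suc k) - t k) (\<lambda>s. x (t k + s)))
           \<longrightarrow> (\<forall>s\<ge>0. norm (x s) \<le> c * norm x0)
             \<and> (x \<longlongrightarrow> 0) at_top
             \<and> summable (total_cost Q R t F x)
             \<and> (x0 \<noteq> 0 \<longrightarrow> nu (\<Sum>k. total_cost Q R t F x k) Pt x0 \<le> \<alpha> - 1)"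
  proof -
  have neg: "\<And>x. x \<noteq> 0 \<Longrightarrow> ((A + B ** Ft) *v x) \<bullet> (Pt *v x) + x \<bullet> (Pt *v ((A + B ** Ft) *v x)) < 0"
    using lyap_neg[OF assms(6) assms(2) assms(3)] .
  have Ppd: "\<And>x. x \<noteq> 0 \<Longrightarrow> quad Pt x > 0" using lyap_pd[OF assms(5) neg] .
  show ?thesis by (rule main_ctrl[OF assms(2) assms(3) assms(4) Ppd])
qed

end
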